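(* Let $n\ge 1$, $k>0$ and $\nu>0$. On the Siegel--Jacobi upper half space $\mathcal{X}^J_n=\{(v,u): v\in M(n,\mathbb{C}),\ v=v^t,\ \Im v>0,\ u\in M(1,n,\mathbb{C})\}$ let $\omega_{\mathcal{X}^J_n}$ be the two-form (the image under the partial Cayley transform of the invariant Kähler two-form of the Siegel--Jacobi ball $\mathcal{D}^J_n$) given by $$-\mathrm{i}\,\omega_{\mathcal{X}^J_n}(v,u)=\frac{k}{2}\operatorname{tr}(H\wedge\bar H)+\frac{2\nu}{\mathrm{i}}\operatorname{tr}(G^tD\wedge\bar G),\qquad D:=(\bar v-v)^{-1},\quad H:=D\,\mathrm{d}v,\quad G^t:=\mathrm{d}u-p\,\mathrm{d}v,$$ where $p:=(u-\bar u)(v-\bar v)^{-1}\in M(1,n,\mathbb{R})$. Introduce real coordinates $(x,y,p,q)$ by $v=x+\mathrm{i}y$ with $x,y$ real symmetric $n\times n$ matrices, $y$ positive definite, and $u=pv+q$ with $p,q\in M(1,n,\mathbb{R})$ (so that $G^t=\mathrm{d}p\,(x+\mathrm{i}y)+\mathrm{d}q$). Then $$\omega_{\mathcal{X}^J_n}(x,y,p,q)=\omega_1+\omega_2,$$ where $$\omega_1=\frac{k}{4}\operatorname{tr}\big(y^{-1}\mathrm{d}x\wedge y^{-1}\mathrm{d}y\big)=-\frac{k}{4}\operatorname{tr}\big(\mathrm{d}x\wedge \mathrm{d}(y^{-1})\big),\qquad \omega_2=2\nu\,\mathrm{d}q^t\wedge\mathrm{d}p=\sum_{i=1}^n \mathrm{d}(2\nu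 q_i)\wedge \mathrm{d}p_i .$$ Moreover, $\omega_1$ is in Darboux form $$\omega_1=\sum_{a=1}^n \mathrm{d}\Big(\tfrac{k}{4}x_{aa}\Big)\wedge \mathrm{d}\big(-(y^{-1})_{aa}\big)+\sum_{1\le a<b\le n}\mathrm{d}\Big(\tfrac{k}{2}x_{ab}\Big)\wedge \mathrm{d}\big(-(y^{-1})_{ab}\big),$$ so that $\omega_{\mathcal{X}^J_n}=\sum_{I=1}^{n(n+3)/2}\mathrm{d}Q^I\wedge\mathrm{d}P^I$ with the $n(n+1)/2$ pairs $(Q^I,P^I)$ equal to $(\tfrac{k}{4}x_{aa},-(y^{-1})_{aa})$, $(\tfrac{k}{2}x_{ab},-(y^{-1})_{ab})$ ($a<b$), together with the $n$ pairs $(2\nu q_i,p_i)$.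
   Context: Matrix-valued differential forms are multiplied using matrix multiplication combined with the wedge product of their entries; $\operatorname{tr}$ is the trace; $\bar{\ }$ denotes complex conjugation and $G=(G^t)^t$ is the column of one-forms corresponding to the row $G^t$. The parameters $k$ (with $2k\in\mathbb{N}$) and $\nu>0$ index, respectively, the holomorphic discrete series of $\mathrm{Sp}(n,\mathbb{R})$ and the representations of the Heisenberg group; here they are just positive constants. *)

theory Defs
  imports "HOL-Analysis.Analysis"
begin

text \<open>Points of the real parameter space: (x, y, p, q) with x, y real n x n matrices
  and p, q real 1 x n matrices.  Tangent vectors live in the same vector space.\<close>

type_synonym 'n rpt = "(real^'n^'n) \<times> (real^'n^'n) \<times> (real^'n^1) \<times> (real^'n^1)"

definition xco :: "'n rpt \<Rightarrow> real^'n^'n" where "xco P = fst P"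
definition yco :: "'n rpt \<Rightarrow> real^'n^'n" where "yco P = fst (snd P)"
definition pco :: "'n rpt \<Rightarrow> real^'n^1" where "pco P = fst (snd (snd P))"
definition qco :: "'n rpt \<Rightarrow> real^'n^1" where "qco P = snd (snd (snd P))"

definition symmetric_mat :: "'a^'n^'n \<Rightarrow> bool" where
  "symmetric_mat A \<longleftrightarrow> transpose A = A"

definition pos_def :: "real^'n^'n \<Rightarrow> bool" where
  "pos_def A \<longleftrightarrow> symmetric_mat A \<and> (\<forall>z. z \<noteq> 0 \<longrightarrow> z \<bullet> (A *v z) > 0)"

text \<open>exterior derivative of a (vector/matrix valued) function, as a one-form\<close>
definition dd :: "('v::real_normed_vector \<Rightarrow> 'w::real_normed_vector) \<Rightarrow> 'v \<Rightarrow> 'v \<Rightarrow> 'w" where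
  "dd f P = frechet_derivative f (at P)"

definition wedge :: "('v \<Rightarrow> real) \<Rightarrow> ('v \<Rightarrow> real) \<Rightarrow> 'v \<Rightarrow> 'v \<Rightarrow> real" where
  "wedge a b T1 T2 = a T1 * b T2 - a T2 * b T1"

definition mwedge :: "('v \<Rightarrow> 'a::comm_ring_1^'m^'l) \<Rightarrow> ('v \<Rightarrow> 'a^'k^'m) \<Rightarrow> 'v \<Rightarrow> 'v \<Rightarrow> 'a^'k^'l" where
  "mwedge A B T1 T2 = A T1 ** B T2 - A T2 ** B T1"

definition mcnj :: "complex^'m^'l \<Rightarrow> complex^'m^'l" where
  "mcnj A = (\<chi> i j. cnj (A $ i $ j))"

definition cmat :: "real^'m^'l \<Rightarrow> complex^'m^'l" where
  "cmat A = (\<chi> i j. complex_of_real (A $ i $ j))"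

text \<open>The two-form on the Siegel--Jacobi upper half space at (v,u), evaluated on the
  tangent vectors (V1,U1), (V2,U2) (dv, du evaluate to V, U; conjugates to conj).
  -i omega = k/2 tr(H /\ Hbar) + 2 nu / i tr(G^t D /\ Gbar).\<close>
definition omega_XJ :: "real \<Rightarrow> real \<Rightarrow> (complex^'n^'n) \<times> (complex^'n^1)
    \<Rightarrow> (complex^'n^'n) \<times> (complex^'n^1) \<Rightarrow> (complex^'n^'n) \<times> (complex^'n^1) \<Rightarrow> complex" where
  "omega_XJ k \<nu> vu T1 T2 =
    (let v = fst vu; u = snd vu;
         D = matrix_inv (mcnj v - v);
         p = (u - mcnj u) ** matrix_inv (v - mcnj v);
         H = (\<lambda>T. D ** fst T);
         Hb = (\<lambda>T. mcnj (H T));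
         Gt = (\<lambda>T. snd T - p ** fst T);
         GtD = (\<lambda>T. Gt T ** D);
         Gb = (\<lambda>T. mcnj (transpose (Gt T)))
     in \<i> * (complex_of_real (k/2) * trace (mwedge H Hb T1 T2)
            + (complex_of_real (2*\<nu>) / \<i>) * trace (mwedge GtD Gb T1 T2)))"

definition Phi :: "('n::finite) rpt \<Rightarrow> (complex^'n^'n) \<times> (complex^'n^1)" where
  "Phi P = (let v = (\<chi> i j. Complex (xco P $ i $ j) (yco P $ i $ j)) in (v, cmat (pco P) ** v + cmat (qco P)))"

definition omega_XJ_real :: "real \<Rightarrow> real \<Rightarrow> ('n::finite) rpt \<Rightarrow> 'n rpt \<Rightarrow> 'n rpt \<Rightarrow> complex" where
  "omega_XJ_real k \<nu> P T1 T2 = omega_XJ k \<nu> (Phi P) (dd Phi P T1) (dd Phi P T2)"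

end

theory Submission
  imports Defs
begin


lemma mm_add_r: "((A::'a::semiring_1^'n^'m) + B) ** C = A ** C + B ** C"
  by (vector matrix_matrix_mult_def sum.distrib[symmetric] field_simps)
lemma mm_diff_r: "((A::'a::ring_1^'n^'m) - B) ** C = A ** C - B ** C"
  by (vector matrix_matrix_mult_def sum_subtractf[symmetric] field_simps)
lemma mm_diff_l: "(A::'a::ring_1^'n^'m) ** (B - C) = A ** B - A ** C"
  by (vector matrix_matrix_mult_def sum_subtractf[symmetric] field_simps)
lemma mm_neg_l: "(- (A::'a::ring_1^'n^'m)) ** B = - (A ** B)"
  by (vector matrix_matrix_mult_def sum_negf[symmetric])
lemma mm_neg_r: "(A::'a::ring_1^'n^'m) ** (- B) = - (A ** B)"
  by (vector matrix_matrix_mult_def sum_negf[symmetric])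
lemma mm_scaleR_l: "(c *\<^sub>R (A::real^'n^'m)) ** B = c *\<^sub>R (A ** B)"
  by (rule scalar_matrix_assoc[symmetric])
lemma mm_scaleR_r: "(A::real^'n^'m) ** (c *\<^sub>R B) = c *\<^sub>R (A ** B)"
  by (simp add: matrix_matrix_mult_def vec_eq_iff sum_distrib_left mult_ac)
lemma trace_scaleR: "trace (c *\<^sub>R (A::real^'n^'n)) = c * trace A"
  by (simp add: trace_def sum_distrib_left)
lemma trace_neg: "trace (- (A::real^'n^'n)) = - trace A"
  by (simp add: trace_def sum_negf)
lemma trace_transpose: "trace (transpose (A::real^'n^'n)) = trace A"
  by (simp add: trace_def transpose_def)
lemma transpose_add: "transpose ((A::'a::semiring_1^'n^'m) + B) = transpose A + transpose B"
  by (vector transpose_def)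
lemma transpose_diff: "transpose ((A::'a::ring_1^'n^'m) - B) = transpose A - transpose B"
  by (vector transpose_def)
lemma transpose_neg: "transpose (- (A::'a::ring_1^'n^'m)) = - transpose A"
  by (vector transpose_def)

definition cx :: "real^'m^'l \<Rightarrow> real^'m^'l \<Rightarrow> complex^'m^'l" where
  "cx M N = (\<chi> i j. Complex (M$i$j) (N$i$j))"

lemma cx_mult: "cx M N ** cx M' N' = cx (M ** M' - N ** N') (M ** N' + N ** M')"
  by (simp add: cx_def matrix_matrix_mult_def vec_eq_iff complex_eq_iff Re_sum Im_sum
      sum_subtractf[symmetric] sum.distrib[symmetric])
lemma cx_add: "cx M N + cx M' N' = cx (M + M') (N + N')"
  by (simp add: cx_def vec_eq_iff complex_eq_iff)
lemma cx_diff: "cx M N - cx M' N' = cx (M - M') (N - N')"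
  by (simp add: cx_def vec_eq_iff complex_eq_iff)
lemma cx_neg: "- cx M N = cx (- M) (- N)"
  by (simp add: cx_def vec_eq_iff complex_eq_iff)
lemma cx_scaleR: "c *\<^sub>R cx M N = cx (c *\<^sub>R M) (c *\<^sub>R N)"
  by (simp add: cx_def vec_eq_iff complex_eq_iff)
lemma mcnj_cx: "mcnj (cx M N) = cx M (- N)"
  by (simp add: cx_def mcnj_def vec_eq_iff complex_eq_iff)
lemma transpose_cx: "transpose (cx M N) = cx (transpose M) (transpose N)"
  by (simp add: cx_def transpose_def vec_eq_iff complex_eq_iff)
lemma trace_cx: "trace (cx M N) = Complex (trace M) (trace N)"
  by (simp add: cx_def trace_def complex_eq_iff Re_sum Im_sum)
lemma cmat_cx: "cmat M = cx M 0"
  by (simp add: cx_def cmat_def vec_eq_iff complex_eq_iff)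
lemma mat1_cx: "mat 1 = cx (mat 1) 0"
  by (simp add: cx_def mat_def vec_eq_iff complex_eq_iff)
lemma cx_inj: "cx M N = cx M' N' \<longleftrightarrow> M = M' \<and> N = N'"
  by (auto simp add: cx_def vec_eq_iff complex_eq_iff)

lemma matrix_inv_eq:
  fixes A B :: "'a::field^'n^'n"
  assumes "A ** B = mat 1" shows "matrix_inv A = B"
proof -
  have BA: "B ** A = mat 1" using assms matrix_left_right_inverse by blast
  have "A ** matrix_inv A = mat 1 \<and> matrix_inv A ** A = mat 1"
    unfolding matrix_inv_def by (rule someI[of _ B]) (use assms BA in auto)
  then have "matrix_inv A = (B ** A) ** matrix_inv A" using BA by simp
  also have "\<dots> = B" by (metis \<open>_ \<and> _\<close> matrix_mul_assoc matrix_mul_rid)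
  finally show ?thesis .
qed



lemma bounded_linear_cx: "bounded_linear (\<lambda>z. cx (fst z) (snd z) :: complex^'m^'l)"
proof -
  have "linear (\<lambda>z. cx (fst z) (snd z) :: complex^'m^'l)"
    by (rule linearI) (simp_all add: cx_add cx_scaleR)
  then show ?thesis using linear_conv_bounded_linear by blast
qed

lemma has_derivative_cx:
  assumes "(f has_derivative f') (at x within S)" "(g has_derivative g') (at x within S)"
  shows "((\<lambda>x. cx (f x) (g x)) has_derivative (\<lambda>h. cx (f' h) (g' h))) (at x within S)"
  using bounded_linear.has_derivative[OF bounded_linear_cx has_derivative_Pair[OF assms]] by simp

lemma bounded_bilinear_mm: "bounded_bilinear (\<lambda>(A::real^'n^'m) (B::real^'k^'n). A ** B)"
proof -
  have "bilinear (\<lambda>(A::real^'n^'m) (B::real^'k^'n). A ** B)"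
    unfolding bilinear_def
    by (auto intro!: linearI simp: matrix_add_ldistrib mm_add_r mm_scaleR_l mm_scaleR_r)
  then show ?thesis using bilinear_conv_bounded_bilinear by blast
qed

lemmas has_derivative_mm = bounded_bilinear.FDERIV[OF bounded_bilinear_mm]

lemma axis_sum_vec: "(\<chi> i. f i) = (\<Sum>i\<in>UNIV. axis i (f i))"
  by (simp add: vec_eq_iff axis_def sum_component if_distrib cong: if_cong)

lemma bounded_linear_axis: "bounded_linear (axis i :: 'a::real_normed_vector \<Rightarrow> 'a^'n)"
proof
  show "axis i (x + y) = (axis i x + axis i y :: 'a^'n)" for x y
    by (simp add: vec_eq_iff axis_def)
  show "axis i (r *\<^sub>R x) = (r *\<^sub>R axis i x :: 'a^'n)" for r x by (simp add: vec_eq_iff axis_def)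
  show "\<exists>K. \<forall>x. norm (axis i x :: 'a^'n) \<le> norm x * K"
  proof (rule exI[of _ 1], intro allI)
    fix x :: 'a
    have "norm (axis i x :: 'a^'n) \<le> (\<Sum>j\<in>UNIV. norm (axis i x $ j))" by (simp add: norm_vec_def L2_set_le_sum)
    also have "\<dots> = norm x" by (simp add: axis_def if_distrib cong: if_cong)
    finally show "norm (axis i x :: 'a^'n) \<le> norm x * 1" by simp
  qed
qed

lemma has_derivative_vec_lambda:
  assumes "\<And>i. ((\<lambda>x. f x i) has_derivative f' i) F"
  shows "((\<lambda>x. \<chi> i. f x i) has_derivative (\<lambda>h. \<chi> i. f' i h)) F"
proof -
  have "((\<lambda>x. \<Sum>i\<in>UNIV. axis i (f x i)) has_derivative (\<lambda>h. \<Sum>i\<in>UNIV. axis i (f' i h))) F"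
    by (intro has_derivative_sum bounded_linear.has_derivative[OF bounded_linear_axis] assms)
  then show ?thesis by (simp add: axis_sum_vec[symmetric])
qed

lemma differentiable_vec_lambda:
  assumes "\<And>i. (\<lambda>x. f x i) differentiable F"
  shows "(\<lambda>x. \<chi> i. f x i) differentiable F"
proof -
  from assms obtain f' where "\<And>i. ((\<lambda>x. f x i) has_derivative f' i) F"
    unfolding differentiable_def by metis
  then show ?thesis unfolding differentiable_def by (blast intro: has_derivative_vec_lambda)
qed

lemma differentiable_prod':
  fixes f :: "'i \<Rightarrow> 'a::real_normed_vector \<Rightarrow> 'b::real_normed_field"
  assumes "\<And>i. f i differentiable (at x within S)"
  shows "(\<lambda>x. \<Prod>i\<in>I. f i x) differentiable (at x within S)"
proof -
  from assms obtain f' where "\<And>i. (f i has_derivative f' i) (at x within S)"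
    unfolding differentiable_def by metis
  then show ?thesis unfolding differentiable_def by (blast intro: has_derivative_prod)
qed

lemma det_differentiable:
  assumes "\<And>i j. (\<lambda>x. M x $ i $ j) differentiable (at x within S)"
  shows "(\<lambda>x. det (M x :: real^'n^'n)) differentiable (at x within S)"
  unfolding det_def
  apply (rule differentiable_sum)
   apply (simp add: finite_permutations)
  apply (intro ballI differentiable_mult differentiable_const differentiable_prod' assms)
  done



lemma entry_differentiable: "(\<lambda>A::real^'n^'m. A $ i $ l) differentiable F"
  by (rule bounded_linear_imp_differentiable[OF bounded_linear_compose[OF bounded_linear_vec_nth bounded_linear_vec_nth]])

definition cram :: "real^'n^'n \<Rightarrow> real^'n^'n" where
  "cram A = (\<chi> k j. det (\<chi> i l. if l = k then (if i = j then 1 else 0) else A$i$l) / det A)"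

lemma cram_eq: assumes "det A \<noteq> 0" shows "matrix_inv A = cram A"
proof -
  have inv: "invertible A" using assms invertible_det_nz by blast
  then obtain B where AB: "A ** B = mat 1" unfolding invertible_def by blast
  have mi: "matrix_inv A = B" using matrix_inv_eq[OF AB] .
  show ?thesis
  proof (simp add: vec_eq_iff cram_def mi, intro allI)
    fix k j
    have "A *v (B *v axis j 1) = axis j 1"
      by (simp add: matrix_vector_mul_assoc AB)
    then have "B *v axis j 1 = (\<chi> k. det (\<chi> i l. if l = k then axis j 1 $ i else A$i$l) / det A)"
      using cramer[OF assms] by blast
    then have "(B *v axis j 1) $ k = det (\<chi> i l. if l = k then axis j 1 $ i else A$i$l) / det A"
      by simp
    moreover have "(B *v axis j 1) $ k = B $ k $ j"
      by (simp add: matrix_vector_mult_def axis_def if_distrib cong: if_cong)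
    moreover have "(\<chi> i l. if l = k then axis j 1 $ i else A$i$l) = (\<chi> i l. if l = k then (if i = j then 1 else 0) else A$i$l)"
      by (simp add: axis_def vec_eq_iff)
    ultimately show "B $ k $ j = det (\<chi> i l. if l = k then (if i = j then 1 else 0) else A$i$l) / det A"
      by simp
  qed
qed

lemma det_diff_all: "(\<lambda>A::real^'n^'n. det A) differentiable (at A within S)"
  using det_differentiable[of "\<lambda>A. A"] entry_differentiable by blast

lemma cram_differentiable: assumes "det A \<noteq> 0" shows "cram differentiable (at A)"
  unfolding cram_def
  apply (intro differentiable_vec_lambda differentiable_divide det_diff_all assms)
  apply (rule det_differentiable)
  subgoal for k j i ja by (cases "ja = k") (simp_all add: entry_differentiable)
  done

lemma has_derivative_matrix_inv:
  fixes y :: "real^'n^'n"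
  assumes "invertible y"
  shows "(matrix_inv has_derivative (\<lambda>h. - (matrix_inv y ** h ** matrix_inv y))) (at y)"
proof -
  let ?S = "{A::real^'n^'n. det A \<noteq> 0}"
  have dy: "det y \<noteq> 0" using assms invertible_det_nz by blast
  have cont: "continuous_on UNIV (\<lambda>A::real^'n^'n. det A)"
    by (rule differentiable_imp_continuous_on) (simp add: differentiable_on_def det_diff_all)
  have opS: "open ?S" by (rule open_Collect_neq[OF cont continuous_on_const])
  obtain D where D0: "(cram has_derivative D) (at y)"
    using cram_differentiable[OF dy] unfolding differentiable_def by blast
  have D: "(matrix_inv has_derivative D) (at y)"
    by (rule has_derivative_transform_within_open[OF D0 opS]) (auto simp: dy cram_eq)
  let ?Y = "matrix_inv y"
  have yY: "y ** ?Y = mat 1" using assms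
    by (metis invertible_def matrix_inv_eq)
  have Yy: "?Y ** y = mat 1" using yY matrix_left_right_inverse by blast
  have P1: "((\<lambda>A. A ** matrix_inv A) has_derivative (\<lambda>h. y ** D h + h ** ?Y)) (at y)"
    using has_derivative_mm[OF has_derivative_ident D] by simp
  have P2: "((\<lambda>A. A ** matrix_inv A) has_derivative (\<lambda>h. 0)) (at y)"
  proof (rule has_derivative_transform_within_open[OF has_derivative_const[of "mat 1"] opS])
    show "y \<in> ?S" using dy by simp
    fix A assume "A \<in> ?S"
    then have "invertible A" using invertible_det_nz by blast
    then show "mat 1 = A ** matrix_inv A" by (metis invertible_def matrix_inv_eq)
  qed
  have eq: "\<And>h. y ** D h + h ** ?Y = 0"
    using has_derivative_unique[OF P1 P2] by metis
  have "D h = - (?Y ** h ** ?Y)" for h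
  proof -
    have "?Y ** (y ** D h + h ** ?Y) = 0" using eq by simp
    then have "D h + ?Y ** h ** ?Y = 0"
      by (simp add: matrix_add_ldistrib matrix_mul_assoc Yy)
    then show ?thesis by (simp add: eq_neg_iff_add_eq_0)
  qed
  then have "D = (\<lambda>h. - (?Y ** h ** ?Y))" by auto
  then show ?thesis using D by simp
qed



lemma d_xco: "(xco has_derivative xco) F"
proof -
  have "bounded_linear (xco :: 'n::finite rpt \<Rightarrow> _)" unfolding xco_def[abs_def] by (rule bounded_linear_fst)
  then show ?thesis by (rule bounded_linear_imp_has_derivative)
qed
lemma d_yco: "(yco has_derivative yco) F"
proof -
  have "bounded_linear (yco :: 'n::finite rpt \<Rightarrow> _)" unfolding yco_def[abs_def]
    by (rule bounded_linear_compose[OF bounded_linear_fst bounded_linear_snd])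
  then show ?thesis by (rule bounded_linear_imp_has_derivative)
qed
lemma d_pco: "(pco has_derivative pco) F"
proof -
  have "bounded_linear (pco :: 'n::finite rpt \<Rightarrow> _)" unfolding pco_def[abs_def]
    by (rule bounded_linear_compose[OF bounded_linear_fst bounded_linear_compose[OF bounded_linear_snd bounded_linear_snd]])
  then show ?thesis by (rule bounded_linear_imp_has_derivative)
qed
lemma d_qco: "(qco has_derivative qco) F"
proof -
  have "bounded_linear (qco :: 'n::finite rpt \<Rightarrow> _)" unfolding qco_def[abs_def]
    by (rule bounded_linear_compose[OF bounded_linear_snd bounded_linear_compose[OF bounded_linear_snd bounded_linear_snd]])
  then show ?thesis by (rule bounded_linear_imp_has_derivative)
qed

lemma d_entry: "(f has_derivative f') F \<Longrightarrow> ((\<lambda>x. c * (f x :: real^'n^'m) $ i $ j) has_derivative (\<lambda>h. c * f' h $ i $ j)) F"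
  by (intro derivative_intros bounded_linear.has_derivative[OF bounded_linear_vec_nth]) 

lemma Phi_cx: "Phi P = (cx (xco P) (yco P), cx (pco P ** xco P + qco P) (pco P ** yco P))"
  by (simp add: Phi_def Let_def cx_def[symmetric] cmat_cx cx_mult cx_add)

lemma d_Phi: "(Phi has_derivative (\<lambda>T. (cx (xco T) (yco T),
     cx (pco P ** xco T + pco T ** xco P + qco T) (pco P ** yco T + pco T ** yco P)))) (at P)"
  unfolding Phi_cx[abs_def]
  by (intro has_derivative_Pair has_derivative_cx has_derivative_add has_derivative_mm d_xco d_yco d_pco d_qco)

lemma d_inv: assumes "invertible (yco P)"
  shows "((\<lambda>P'. matrix_inv (yco P')) has_derivative (\<lambda>T. - (matrix_inv (yco P) ** yco T ** matrix_inv (yco P)))) (at P)"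
  using has_derivative_compose[OF d_yco has_derivative_matrix_inv[OF assms]] .

lemma dd_eq: "(f has_derivative f') (at P) \<Longrightarrow> dd f P = f'"
  unfolding dd_def by (metis frechet_derivative_at)



lemmas S = cx_mult cx_add cx_diff cx_neg mcnj_cx transpose_cx trace_cx
  mm_add_r mm_diff_r mm_diff_l mm_neg_l mm_neg_r mm_scaleR_l mm_scaleR_r matrix_add_ldistrib
  trace_add trace_sub trace_scaleR trace_neg

lemma part1:
  fixes Y dx1 dy1 dx2 dy2 :: "real^'n^'n"
  shows "trace ((cx 0 ((1/2) *\<^sub>R Y) ** cx dx1 dy1) ** mcnj (cx 0 ((1/2) *\<^sub>R Y) ** cx dx2 dy2)
       - (cx 0 ((1/2) *\<^sub>R Y) ** cx dx2 dy2) ** mcnj (cx 0 ((1/2) *\<^sub>R Y) ** cx dx1 dy1))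
   = Complex 0 ((1/2) * (trace ((Y ** dx2) ** (Y ** dy1)) - trace ((Y ** dx1) ** (Y ** dy2))))"
  using trace_mul_sym[of "Y ** dy1" "Y ** dy2"] trace_mul_sym[of "Y ** dx1" "Y ** dx2"]
    trace_mul_sym[of "Y ** dy1" "Y ** dx2"] trace_mul_sym[of "Y ** dy2" "Y ** dx1"]
  by (simp add: S)



lemma part2:
  fixes Y x y dx1 dy1 dx2 dy2 :: "real^'n^'n" and p dp1 dq1 dp2 dq2 :: "real^'n^1"
  assumes Yy: "Y ** y = mat 1" and yY: "y ** Y = mat 1"
    and sY: "transpose Y = Y" and sx: "transpose x = x" and sy: "transpose y = y"
  defines "G1 \<equiv> cx (p ** dx1 + dp1 ** x + dq1) (p ** dy1 + dp1 ** y) - cx p 0 ** cx dx1 dy1"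
    and "G2 \<equiv> cx (p ** dx2 + dp2 ** x + dq2) (p ** dy2 + dp2 ** y) - cx p 0 ** cx dx2 dy2"
  shows "trace ((G1 ** cx 0 ((1/2) *\<^sub>R Y)) ** mcnj (transpose G2) - (G2 ** cx 0 ((1/2) *\<^sub>R Y)) ** mcnj (transpose G1))
    = Complex (trace (dq1 ** transpose dp2) - trace (dq2 ** transpose dp1)) 0"
proof -
  have tT: "\<And>M::real^1^1. trace M = trace (transpose M)" by (simp add: trace_transpose)
  have tT': "\<And>M::real^1^1. trace (transpose M) = trace M" by (simp add: trace_transpose)
  note T = matrix_transpose_mul matrix_mul_assoc sx sy sY
  have c1: "M ** y ** Y = M" for M :: "real^'n^1" by (metis matrix_mul_assoc yY matrix_mul_rid)
  have c2: "M ** Y ** y = M" for M :: "real^'n^1" by (metis matrix_mul_assoc Yy matrix_mul_rid)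
  have f1: "trace (dp1 ** y ** transpose dp2) = trace (dp2 ** y ** transpose dp1)"
    by (subst tT) (simp add: T)
  have f2: "trace (dp1 ** x ** Y ** x ** transpose dp2) = trace (dp2 ** x ** Y ** x ** transpose dp1)"
    by (subst tT) (simp add: T)
  have f3: "trace (dq1 ** Y ** x ** transpose dp2) = trace (dp2 ** x ** Y ** transpose dq1)"
    by (subst tT) (simp add: T)
  have f4: "trace (dp1 ** x ** Y ** transpose dq2) = trace (dq2 ** Y ** x ** transpose dp1)"
    by (subst tT) (simp add: T)
  have f5: "trace (dq1 ** Y ** transpose dq2) = trace (dq2 ** Y ** transpose dq1)"
    by (subst tT) (simp add: T)
  have f6: "trace (dp1 ** transpose dq2) = trace (dq2 ** transpose dp1)"
    by (subst tT) (simp add: T)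
  have f7: "trace (dp2 ** transpose dq1) = trace (dq1 ** transpose dp2)"
    by (subst tT) (simp add: T)
  show ?thesis
    unfolding G1_def G2_def
    apply (simp add: S transpose_add transpose_diff transpose_neg T c1 c2 f1 f2 f3 f4 f5 f6 f7)
    apply (simp add: field_simps)
    done
qed



lemma d_entry1: "(f has_derivative f') F \<Longrightarrow> ((\<lambda>x. (f x :: real^'n^'m) $ i $ j) has_derivative (\<lambda>h. f' h $ i $ j)) F"
  using d_entry[of f f' F 1] by simp

lemma d_entry_neg: "(f has_derivative f') F \<Longrightarrow> ((\<lambda>x. - (f x :: real^'n^'m) $ i $ j) has_derivative (\<lambda>h. - f' h $ i $ j)) F"
  using d_entry[of f f' F "-1"] by simp

lemma pos_def_invertible: assumes "pos_def (y::real^'n^'n)" shows "invertible y"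
proof -
  have "inj ((*v) y)"
  proof (rule injI)
    fix a b assume "y *v a = y *v b"
    then have "y *v (a - b) = 0" by (simp add: matrix_vector_mult_diff_distrib)
    then have "(a - b) \<bullet> (y *v (a - b)) = 0" by simp
    then show "a = b" using assms unfolding pos_def_def
      by (metis less_irrefl right_minus_eq)
  qed
  then show ?thesis using matrix_left_invertible_injective invertible_left_inverse by blast
qed

lemma trace_1: "trace (M::real^1^1) = M $ 1 $ 1"
  by (simp add: trace_def)

lemma sym_sum:
  fixes f :: "'n::{finite,linorder} \<Rightarrow> 'n \<Rightarrow> real"
  assumes "\<And>a b. f a b = f b a"
  shows "(\<Sum>a\<in>UNIV. \<Sum>b\<in>UNIV. f a b) = (\<Sum>a\<in>UNIV. f a a) + 2 * (\<Sum>(a,b)\<in>{(a,b). a < b}. f a b)"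
proof -
  let ?L = "{(a,b). a < (b::'n)}" and ?G = "{(a,b). b < (a::'n)}" and ?D = "{(a,b). a = (b::'n)}"
  have U: "(UNIV :: ('n\<times>'n) set) = ?L \<union> ?G \<union> ?D" by auto
  have "(\<Sum>a\<in>UNIV. \<Sum>b\<in>UNIV. f a b) = (\<Sum>(a,b)\<in>UNIV. f a b)"
    by (simp add: sum.cartesian_product)
  also have "\<dots> = (\<Sum>(a,b)\<in>?L. f a b) + (\<Sum>(a,b)\<in>?G. f a b) + (\<Sum>(a,b)\<in>?D. f a b)"
    unfolding U by (subst sum.union_disjoint, auto)+
  also have "(\<Sum>(a,b)\<in>?G. f a b) = (\<Sum>(a,b)\<in>?L. f a b)"
    by (rule sum.reindex_bij_witness[of _ "\<lambda>(a,b). (b,a)" "\<lambda>(a,b). (b,a)"]) (auto simp: assms)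
  also have "(\<Sum>(a,b)\<in>?D. f a b) = (\<Sum>a\<in>UNIV. f a a)"
    by (rule sum.reindex_bij_witness[of _ "\<lambda>a. (a,a)" "fst"]) auto
  finally show ?thesis by simp
qed

theorem lemma2:
  fixes k \<nu> :: real and P :: "('n::{finite,linorder}) rpt"
  assumes "k > 0" and "\<nu> > 0"
    and "symmetric_mat (xco P)" and "pos_def (yco P)"
  defines "\<omega>1 \<equiv> (\<lambda>T1 T2. k/4 * trace (mwedge (\<lambda>T. matrix_inv (yco P) ** dd xco P T)
                                            (\<lambda>T. matrix_inv (yco P) ** dd yco P T) T1 T2))"
    and "\<omega>2 \<equiv> (\<lambda>T1 T2. 2*\<nu> * (mwedge (dd qco P) (\<lambda>T. transpose (dd pco P T)) T1 T2) $ 1 $ 1)"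
  shows "\<forall>T1 T2. symmetric_mat (xco T1) \<and> symmetric_mat (yco T1) \<and>
                 symmetric_mat (xco T2) \<and> symmetric_mat (yco T2) \<longrightarrow>
     omega_XJ_real k \<nu> P T1 T2 = complex_of_real (\<omega>1 T1 T2 + \<omega>2 T1 T2)
   \<and> \<omega>1 T1 T2 = - k/4 * trace (mwedge (dd xco P) (dd (\<lambda>P'. matrix_inv (yco P')) P) T1 T2)
   \<and> \<omega>2 T1 T2 = (\<Sum>i\<in>UNIV. wedge (dd (\<lambda>P'. 2*\<nu> * qco P' $ 1 $ i) P)
                                   (dd (\<lambda>P'. pco P' $ 1 $ i) P) T1 T2)
   \<and> \<omega>1 T1 T2 = (\<Sum>a\<in>UNIV. wedge (dd (\<lambda>P'. k/4 * xco P' $ a $ a) P)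
                                   (dd (\<lambda>P'. - matrix_inv (yco P') $ a $ a) P) T1 T2)
              + (\<Sum>(a,b)\<in>{(a,b). a < b}. wedge (dd (\<lambda>P'. k/2 * xco P' $ a $ b) P)
                                   (dd (\<lambda>P'. - matrix_inv (yco P') $ a $ b) P) T1 T2)"
proof (intro allI impI conjI)
  fix T1 T2 :: "'n rpt"
  assume symT: "symmetric_mat (xco T1) \<and> symmetric_mat (yco T1) \<and>
                 symmetric_mat (xco T2) \<and> symmetric_mat (yco T2)"
  define x where "x = xco P"
  define y where "y = yco P"
  define p where "p = pco P"
  define q where "q = qco P"
  define Y where "Y = matrix_inv y"
  define dx1 where "dx1 = xco T1"
  define dy1 where "dy1 = yco T1"
  define dp1 where "dp1 = pco T1"
  define dq1 where "dq1 = qco T1"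
  define dx2 where "dx2 = xco T2"
  define dy2 where "dy2 = yco T2"
  define dp2 where "dp2 = pco T2"
  define dq2 where "dq2 = qco T2"
  have sx: "transpose x = x" using assms(3) unfolding x_def symmetric_mat_def .
  have sy: "transpose y = y" using assms(4) unfolding y_def pos_def_def symmetric_mat_def by blast
  have invy: "invertible y" using pos_def_invertible assms(4) y_def by blast
  have yY: "y ** Y = mat 1" unfolding Y_def using invy by (metis invertible_def matrix_inv_eq)
  have Yy: "Y ** y = mat 1" using yY matrix_left_right_inverse by blast
  have sY: "transpose Y = Y"
  proof -
    have "y ** transpose Y = mat 1" using arg_cong[OF Yy, of transpose] sy
      by (simp add: matrix_transpose_mul)
    then have "matrix_inv y = transpose Y" by (rule matrix_inv_eq)
    then show ?thesis unfolding Y_def by simp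
  qed
  have sdx1: "transpose dx1 = dx1" and sdy1: "transpose dy1 = dy1"
    and sdx2: "transpose dx2 = dx2" and sdy2: "transpose dy2 = dy2"
    using symT unfolding symmetric_mat_def dx1_def dy1_def dx2_def dy2_def by auto
  have ddx: "dd xco P = xco" by (rule dd_eq[OF d_xco])
  have ddy: "dd yco P = yco" by (rule dd_eq[OF d_yco])
  have ddp: "dd pco P = pco" by (rule dd_eq[OF d_pco])
  have ddq: "dd qco P = qco" by (rule dd_eq[OF d_qco])
  have ddinv: "dd (\<lambda>P'. matrix_inv (yco P')) P = (\<lambda>T. - (Y ** yco T ** Y))"
    unfolding Y_def y_def by (rule dd_eq[OF d_inv]) (use invy y_def in simp)
  have ddPhi: "dd Phi P = (\<lambda>T. (cx (xco T) (yco T),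
     cx (p ** xco T + pco T ** x + qco T) (p ** yco T + pco T ** y)))"
    unfolding p_def x_def y_def by (rule dd_eq[OF d_Phi])
  have ddq_i: "\<And>i. dd (\<lambda>P'. 2*\<nu> * qco P' $ 1 $ i) P = (\<lambda>T. 2*\<nu> * qco T $ 1 $ i)"
    by (rule dd_eq[OF d_entry[OF d_qco]])
  have ddp_i: "\<And>i. dd (\<lambda>P'. pco P' $ 1 $ i) P = (\<lambda>T. pco T $ 1 $ i)"
    by (rule dd_eq[OF d_entry1[OF d_pco]])
  have ddx_ab: "\<And>c a b. dd (\<lambda>P'. c * xco P' $ a $ b) P = (\<lambda>T. c * xco T $ a $ b)"
    by (rule dd_eq[OF d_entry[OF d_xco]])
  have ddY_ab: "\<And>a b. dd (\<lambda>P'. - matrix_inv (yco P') $ a $ b) P = (\<lambda>T. (Y ** yco T ** Y) $ a $ b)"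
    unfolding Y_def y_def using d_entry_neg[OF d_inv[OF invy[unfolded y_def]]]
    by (simp add: dd_eq)
  have w1: "\<omega>1 T1 T2 = k/4 * (trace (Y ** dx1 ** (Y ** dy2)) - trace (Y ** dx2 ** (Y ** dy1)))"
    unfolding assms(5) mwedge_def ddx ddy dx1_def dx2_def dy1_def dy2_def Y_def y_def
    by (simp add: trace_sub)
  have w2: "\<omega>2 T1 T2 = 2*\<nu> * (trace (dq1 ** transpose dp2) - trace (dq2 ** transpose dp1))"
    unfolding assms(6) mwedge_def ddq ddp dq1_def dq2_def dp1_def dp2_def
    by (simp add: trace_1)
  define Dc where "Dc = cx 0 ((1/2) *\<^sub>R Y)"
  have Dm: "matrix_inv (mcnj (cx x y) - cx x y) = Dc"
  proof (rule matrix_inv_eq)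
    have e: "mcnj (cx x y) - cx x y = cx 0 ((-2) *\<^sub>R y)"
      by (simp add: cx_def mcnj_def vec_eq_iff complex_eq_iff)
    have "(mcnj (cx x y) - cx x y) ** Dc = cx (mat 1) 0"
      unfolding Dc_def e by (simp add: S yY)
    then show "(mcnj (cx x y) - cx x y) ** Dc = mat 1" by (simp add: mat1_cx[symmetric])
  qed
  have c1: "M ** y ** Y = M" for M :: "real^_^1" by (metis matrix_mul_assoc yY matrix_mul_rid)
  have Dm2: "matrix_inv (cx x y - mcnj (cx x y)) = cx 0 ((-1/2) *\<^sub>R Y)"
  proof (rule matrix_inv_eq)
    have e: "cx x y - mcnj (cx x y) = cx 0 (2 *\<^sub>R y)"
      by (simp add: cx_def mcnj_def vec_eq_iff complex_eq_iff)
    have "(cx x y - mcnj (cx x y)) ** cx 0 ((-1/2) *\<^sub>R Y) = cx (mat 1) 0"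
      unfolding e by (simp add: S yY)
    then show "(cx x y - mcnj (cx x y)) ** cx 0 ((-1/2) *\<^sub>R Y) = mat 1" by (simp add: mat1_cx[symmetric])
  qed
  have pc: "(cx (p ** x + q) (p ** y) - mcnj (cx (p ** x + q) (p ** y))) ** matrix_inv (cx x y - mcnj (cx x y)) = cx p 0"
  proof -
    have e: "cx (p ** x + q) (p ** y) - mcnj (cx (p ** x + q) (p ** y)) = cx 0 (2 *\<^sub>R (p ** y))"
      by (simp add: cx_def mcnj_def vec_eq_iff complex_eq_iff)
    show ?thesis unfolding Dm2 e by (simp add: S c1 matrix_mul_assoc)
  qed
  define H1 where "H1 = Dc ** cx dx1 dy1"
  define H2 where "H2 = Dc ** cx dx2 dy2"
  define G1 where "G1 = cx (p ** dx1 + dp1 ** x + dq1) (p ** dy1 + dp1 ** y) - cx p 0 ** cx dx1 dy1"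
  define G2 where "G2 = cx (p ** dx2 + dp2 ** x + dq2) (p ** dy2 + dp2 ** y) - cx p 0 ** cx dx2 dy2"
  have om: "omega_XJ_real k \<nu> P T1 T2 = \<i> * (complex_of_real (k/2) * trace (H1 ** mcnj H2 - H2 ** mcnj H1)
     + (complex_of_real (2*\<nu>) / \<i>) * trace ((G1 ** Dc) ** mcnj (transpose G2) - (G2 ** Dc) ** mcnj (transpose G1)))"
    unfolding omega_XJ_real_def omega_XJ_def Let_def ddPhi Phi_cx mwedge_def
    by (simp add: x_def[symmetric] y_def[symmetric] p_def[symmetric] q_def[symmetric]
       dx1_def[symmetric] dy1_def[symmetric] dp1_def[symmetric] dq1_def[symmetric]
       dx2_def[symmetric] dy2_def[symmetric] dp2_def[symmetric] dq2_def[symmetric] Dm pc H1_def H2_def G1_def G2_def)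
  have t1: "trace (H1 ** mcnj H2 - H2 ** mcnj H1) = Complex 0 ((1/2) * (trace ((Y ** dx2) ** (Y ** dy1)) - trace ((Y ** dx1) ** (Y ** dy2))))"
    unfolding H1_def H2_def Dc_def by (rule part1)
  have t2: "trace ((G1 ** Dc) ** mcnj (transpose G2) - (G2 ** Dc) ** mcnj (transpose G1))
    = Complex (trace (dq1 ** transpose dp2) - trace (dq2 ** transpose dp1)) 0"
    unfolding G1_def G2_def Dc_def by (rule part2[OF Yy yY sY sx sy])
    show "omega_XJ_real k \<nu> P T1 T2 = complex_of_real (\<omega>1 T1 T2 + \<omega>2 T1 T2)"
      unfolding om t1 t2 w1 w2 by (simp add: complex_eq_iff algebra_simps) (simp add: field_simps)
    show "\<omega>1 T1 T2 = - k/4 * trace (mwedge (dd xco P) (dd (\<lambda>P'. matrix_inv (yco P')) P) T1 T2)"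
    proof -
      have g1: "trace (Y ** dx1 ** Y ** dy2) = trace (dx1 ** Y ** dy2 ** Y)"
        using trace_mul_sym[of Y "dx1 ** Y ** dy2"] by (simp add: matrix_mul_assoc)
      have g2: "trace (Y ** dx2 ** Y ** dy1) = trace (dx2 ** Y ** dy1 ** Y)"
        using trace_mul_sym[of Y "dx2 ** Y ** dy1"] by (simp add: matrix_mul_assoc)
      show ?thesis unfolding w1 mwedge_def ddx ddinv
        by (simp add: dx1_def[symmetric] dy1_def[symmetric] dx2_def[symmetric] dy2_def[symmetric]
            matrix_mul_assoc g1 g2 trace_sub trace_neg mm_neg_r algebra_simps)
    qed
    show "\<omega>2 T1 T2 = (\<Sum>i\<in>UNIV. wedge (dd (\<lambda>P'. 2*\<nu> * qco P' $ 1 $ i) P)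
                                   (dd (\<lambda>P'. pco P' $ 1 $ i) P) T1 T2)"
      unfolding w2 ddq_i ddp_i wedge_def
      by (simp add: dq1_def[symmetric] dp1_def[symmetric] dq2_def[symmetric] dp2_def[symmetric]
         trace_1 matrix_matrix_mult_def transpose_def sum_distrib_left sum_subtractf[symmetric] algebra_simps)
    show "\<omega>1 T1 T2 = (\<Sum>a\<in>UNIV. wedge (dd (\<lambda>P'. k/4 * xco P' $ a $ a) P)
                                   (dd (\<lambda>P'. - matrix_inv (yco P') $ a $ a) P) T1 T2)
              + (\<Sum>(a,b)\<in>{(a,b). a < b}. wedge (dd (\<lambda>P'. k/2 * xco P' $ a $ b) P)
                                   (dd (\<lambda>P'. - matrix_inv (yco P') $ a $ b) P) T1 T2)"
    proof -
      define F1 where "F1 = Y ** dy1 ** Y"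
      define F2 where "F2 = Y ** dy2 ** Y"
      have sF1: "F1 $ a $ b = F1 $ b $ a" for a b
      proof -
        have "transpose F1 = F1" unfolding F1_def by (simp add: matrix_transpose_mul sY sdy1 matrix_mul_assoc)
        then show ?thesis by (metis transpose_def vec_lambda_beta)
      qed
      have sF2: "F2 $ a $ b = F2 $ b $ a" for a b
      proof -
        have "transpose F2 = F2" unfolding F2_def by (simp add: matrix_transpose_mul sY sdy2 matrix_mul_assoc)
        then show ?thesis by (metis transpose_def vec_lambda_beta)
      qed
      have sX1: "dx1 $ a $ b = dx1 $ b $ a" for a b by (metis sdx1 transpose_def vec_lambda_beta)
      have sX2: "dx2 $ a $ b = dx2 $ b $ a" for a b by (metis sdx2 transpose_def vec_lambda_beta)
      define g where "g a b = dx1 $ a $ b * F2 $ a $ b - dx2 $ a $ b * F1 $ a $ b" for a b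
      have gs: "g a b = g b a" for a b unfolding g_def using sF1 sF2 sX1 sX2 by metis
      have h2: "\<omega>1 T1 T2 = - k/4 * trace (mwedge (dd xco P) (dd (\<lambda>P'. matrix_inv (yco P')) P) T1 T2)"
        by fact
      have "\<omega>1 T1 T2 = k/4 * trace (dx1 ** F2 - dx2 ** F1)"
        unfolding h2 mwedge_def ddx ddinv F1_def F2_def
        by (simp add: dx1_def[symmetric] dy1_def[symmetric] dx2_def[symmetric] dy2_def[symmetric]
            trace_sub trace_neg mm_neg_r algebra_simps)
      also have "\<dots> = k/4 * (\<Sum>a\<in>UNIV. \<Sum>b\<in>UNIV. g a b)"
        unfolding g_def trace_sub
        by (simp add: trace_def matrix_matrix_mult_def sum_subtractf sF1 sF2 cong: sum.cong)
      also have "\<dots> = k/4 * (\<Sum>a\<in>UNIV. g a a) + k/2 * (\<Sum>(a,b)\<in>{(a,b). a < b}. g a b)"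
        unfolding sym_sum[of g, OF gs] by (simp add: algebra_simps)
      finally show ?thesis
        unfolding ddx_ab ddY_ab wedge_def
        by (simp add: dx1_def[symmetric] dy1_def[symmetric] dx2_def[symmetric] dy2_def[symmetric]
            F1_def[symmetric] F2_def[symmetric] g_def sum_distrib_left sum_subtractf split_def algebra_simps)
    qed
qed

end
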